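(* Let $X$ be an abstract simplicial complex with a simplicial action of a finite group $G$ that restricts to an action on a subcomplex $A$ (not necessarily full). Then there is a $G$-equivariant homotopy equivalence $|X|-|A|\simeq_G|X\ominus A|$.
   Context: Simplicial difference $X\ominus A$: vertices are the simplices of $X$ not in $A$ that are minimal (under inclusion) among simplices of $X$ not in $A$; a finite nonempty set $\{\sigma_0,\dots,\sigma_d\}$ of these is a simplex iff $\sigma_0\cup\dots\cup\sigma_d$ is a simplex of $X$. $G$ acts simplicially on $X\ominus A$ through its action on simplices of $X$, and topologically on $|X|-|A|$ through the realization of the action on $X$. A $G$-homotopy equivalence is a $G$-map admitting a $G$-map inverse up to $G$-equivariant homotopies. *)

theory Defs
  imports "HOL-Analysis.Analysis" "HOL-Algebra.Group_Action"
begin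

definition abs_simplicial_complex :: "'v set set \<Rightarrow> bool" where
  "abs_simplicial_complex K \<longleftrightarrow>
     (\<forall>\<sigma>\<in>K. finite \<sigma> \<and> \<sigma> \<noteq> {}) \<and>
     (\<forall>\<sigma>\<in>K. \<forall>\<tau>. \<tau> \<subseteq> \<sigma> \<and> \<tau> \<noteq> {} \<longrightarrow> \<tau> \<in> K)"

definition subcomplex :: "'v set set \<Rightarrow> 'v set set \<Rightarrow> bool" where
  "subcomplex A K \<longleftrightarrow> abs_simplicial_complex A \<and> A \<subseteq> K"

definition cvertices :: "'v set set \<Rightarrow> 'v set" where
  "cvertices K = \<Union>K"

definition sdiff_vertices :: "'v set set \<Rightarrow> 'v set set \<Rightarrow> 'v set set" where
  "sdiff_vertices X A =
     {\<sigma> \<in> X - A. \<forall>\<tau>\<in>X - A. \<tau> \<subseteq> \<sigma> \<longrightarrow> \<tau> = \<sigma>}"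

definition simplicial_difference :: "'v set set \<Rightarrow> 'v set set \<Rightarrow> 'v set set set" where
  "simplicial_difference X A =
     {S. finite S \<and> S \<noteq> {} \<and> S \<subseteq> sdiff_vertices X A \<and> \<Union>S \<in> X}"

text \<open>Points of \<open>|K|\<close> are functions \<open>\<alpha> : V \<rightarrow> [0,1]\<close> (barycentric coordinates) whose
support is a simplex of \<open>K\<close> and whose coordinates sum to 1.\<close>

definition csupp :: "('v \<Rightarrow> real) \<Rightarrow> 'v set" where
  "csupp \<alpha> = {v. \<alpha> v \<noteq> 0}"

definition closed_simplex :: "'v set \<Rightarrow> ('v \<Rightarrow> real) set" where
  "closed_simplex \<sigma> = {\<alpha>. (\<forall>v. 0 \<le> \<alpha> v) \<and> csupp \<alpha> \<subseteq> \<sigma> \<and> sum \<alpha> \<sigma> = 1}"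

definition realization_points :: "'v set set \<Rightarrow> ('v \<Rightarrow> real) set" where
  "realization_points K = {\<alpha>. (\<forall>v. 0 \<le> \<alpha> v) \<and> csupp \<alpha> \<in> K \<and> sum \<alpha> (csupp \<alpha>) = 1}"

text \<open>Each closed simplex carries the (Euclidean) subspace topology from the product
topology on \<open>V \<rightarrow> \<real>\<close>; \<open>|K|\<close> carries the coherent (weak) topology: a set is open iff
its intersection with every closed simplex is open in that simplex.\<close>

definition realization_open :: "'v set set \<Rightarrow> ('v \<Rightarrow> real) set \<Rightarrow> bool" where
  "realization_open K U \<longleftrightarrow> U \<subseteq> realization_points K \<and>
     (\<forall>\<sigma>\<in>K. openin (subtopology (product_topology (\<lambda>_. euclideanreal) UNIV) (closed_simplex \<sigma>))
                    (U \<inter> closed_simplex \<sigma>))"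

lemma istopology_realization_open: "istopology (realization_open K)"
  unfolding istopology_def realization_open_def
proof (intro conjI allI impI)
  fix S T :: "('a \<Rightarrow> real) set"
  assume S: "S \<subseteq> realization_points K \<and> (\<forall>\<sigma>\<in>K. openin (subtopology (product_topology (\<lambda>_. euclideanreal) UNIV) (closed_simplex \<sigma>)) (S \<inter> closed_simplex \<sigma>))"
     and T: "T \<subseteq> realization_points K \<and> (\<forall>\<sigma>\<in>K. openin (subtopology (product_topology (\<lambda>_. euclideanreal) UNIV) (closed_simplex \<sigma>)) (T \<inter> closed_simplex \<sigma>))"
  show "S \<inter> T \<subseteq> realization_points K" using S by blast
  show "\<forall>\<sigma>\<in>K. openin (subtopology (product_topology (\<lambda>_. euclideanreal) UNIV) (closed_simplex \<sigma>)) (S \<inter> T \<inter> closed_simplex \<sigma>)"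
  proof
    fix \<sigma> assume "\<sigma> \<in> K"
    then have "openin (subtopology (product_topology (\<lambda>_. euclideanreal) UNIV) (closed_simplex \<sigma>)) ((S \<inter> closed_simplex \<sigma>) \<inter> (T \<inter> closed_simplex \<sigma>))"
      using S T \<open>\<sigma> \<in> K\<close> by (metis openin_Int)
    then show "openin (subtopology (product_topology (\<lambda>_. euclideanreal) UNIV) (closed_simplex \<sigma>)) (S \<inter> T \<inter> closed_simplex \<sigma>)"
      by (simp add: Int_ac)
  qed
next
  fix \<K> :: "('a \<Rightarrow> real) set set"
  assume H: "\<forall>x\<in>\<K>. x \<subseteq> realization_points K \<and> (\<forall>\<sigma>\<in>K. openin (subtopology (product_topology (\<lambda>_. euclideanreal) UNIV) (closed_simplex \<sigma>)) (x \<inter> closed_simplex \<sigma>))"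
  show "\<Union>\<K> \<subseteq> realization_points K" using H by blast
  show "\<forall>\<sigma>\<in>K. openin (subtopology (product_topology (\<lambda>_. euclideanreal) UNIV) (closed_simplex \<sigma>)) (\<Union>\<K> \<inter> closed_simplex \<sigma>)"
  proof
    fix \<sigma> assume "\<sigma> \<in> K"
    then have "openin (subtopology (product_topology (\<lambda>_. euclideanreal) UNIV) (closed_simplex \<sigma>)) (\<Union>((\<lambda>x. x \<inter> closed_simplex \<sigma>) ` \<K>))"
      using H \<open>\<sigma> \<in> K\<close> by (intro openin_Union) blast
    moreover have "\<Union>((\<lambda>x. x \<inter> closed_simplex \<sigma>) ` \<K>) = \<Union>\<K> \<inter> closed_simplex \<sigma>" by blast
    ultimately show "openin (subtopology (product_topology (\<lambda>_. euclideanreal) UNIV) (closed_simplex \<sigma>)) (\<Union>\<K> \<inter> closed_simplex \<sigma>)"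
      by simp
  qed
qed

definition realization :: "'v set set \<Rightarrow> ('v \<Rightarrow> real) topology" where
  "realization K = topology (realization_open K)"

definition realization_minus :: "'v set set \<Rightarrow> 'v set set \<Rightarrow> ('v \<Rightarrow> real) topology" where
  "realization_minus X A = subtopology (realization X) (realization_points X - realization_points A)"

definition simplicial_action :: "('g, 'b) monoid_scheme \<Rightarrow> ('g \<Rightarrow> 'v \<Rightarrow> 'v) \<Rightarrow> 'v set set \<Rightarrow> bool" where
  "simplicial_action G \<phi> K \<longleftrightarrow> group_action G (cvertices K) \<phi> \<and>
     (\<forall>g\<in>carrier G. \<forall>\<sigma>\<in>K. \<phi> g ` \<sigma> \<in> K)"

definition sdiff_action :: "('g \<Rightarrow> 'v \<Rightarrow> 'v) \<Rightarrow> 'g \<Rightarrow> 'v set \<Rightarrow> 'v set" where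
  "sdiff_action \<phi> g \<sigma> = \<phi> g ` \<sigma>"

text \<open>Realization of a vertex action: \<open>(g\<alpha>)(g v) = \<alpha>(v)\<close>.\<close>

definition realization_action ::
  "('g, 'b) monoid_scheme \<Rightarrow> ('g \<Rightarrow> 'v \<Rightarrow> 'v) \<Rightarrow> 'v set set \<Rightarrow> 'g \<Rightarrow> ('v \<Rightarrow> real) \<Rightarrow> ('v \<Rightarrow> real)" where
  "realization_action G \<phi> K g \<alpha> = (\<lambda>w. if w \<in> cvertices K then \<alpha> (\<phi> (inv\<^bsub>G\<^esub> g) w) else 0)"

definition equivariant_map ::
  "('g, 'b) monoid_scheme \<Rightarrow> 'x topology \<Rightarrow> ('g \<Rightarrow> 'x \<Rightarrow> 'x) \<Rightarrow> 'y topology \<Rightarrow> ('g \<Rightarrow> 'y \<Rightarrow> 'y)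
    \<Rightarrow> ('x \<Rightarrow> 'y) \<Rightarrow> bool" where
  "equivariant_map G S a T b f \<longleftrightarrow> continuous_map S T f \<and>
     (\<forall>g\<in>carrier G. \<forall>x\<in>topspace S. f (a g x) = b g (f x))"

definition equivariant_homotopy_equivalent ::
  "('g, 'b) monoid_scheme \<Rightarrow> 'x topology \<Rightarrow> ('g \<Rightarrow> 'x \<Rightarrow> 'x) \<Rightarrow> 'y topology \<Rightarrow> ('g \<Rightarrow> 'y \<Rightarrow> 'y) \<Rightarrow> bool" where
  "equivariant_homotopy_equivalent G S a T b \<longleftrightarrow>
     (\<exists>f h. equivariant_map G S a T b f \<and> equivariant_map G T b S a h \<and>
        homotopic_with (\<lambda>k. \<forall>g\<in>carrier G. \<forall>x\<in>topspace S. k (a g x) = a g (k x)) S S (h \<circ> f) id \<and>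
        homotopic_with (\<lambda>k. \<forall>g\<in>carrier G. \<forall>y\<in>topspace T. k (b g y) = b g (k y)) T T (f \<circ> h) id)"

end

theory Submission
  imports Defs
begin

abbreviation PT :: "('a \<Rightarrow> real) topology" where
  "PT \<equiv> product_topology (\<lambda>_. euclideanreal) UNIV"

lemma topspace_PT [simp]: "topspace PT = UNIV"
  by simp

lemma openin_realization: "openin (realization K) U \<longleftrightarrow> realization_open K U"
  by (simp add: realization_def istopology_realization_open)

lemma cs_subset_pts:
  assumes K: "abs_simplicial_complex K" and s: "\<sigma> \<in> K"
  shows "closed_simplex \<sigma> \<subseteq> realization_points K"
proof
  fix \<alpha> assume a: "\<alpha> \<in> closed_simplex \<sigma>"
  have fin: "finite \<sigma>" using K s by (auto simp: abs_simplicial_complex_def)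
  have sub: "csupp \<alpha> \<subseteq> \<sigma>" and s1: "sum \<alpha> \<sigma> = 1" and nn: "\<forall>v. 0 \<le> \<alpha> v"
    using a by (auto simp: closed_simplex_def)
  have eq: "sum \<alpha> (csupp \<alpha>) = sum \<alpha> \<sigma>"
    using fin sub by (intro sum.mono_neutral_left) (auto simp: csupp_def)
  have ne: "csupp \<alpha> \<noteq> {}" using eq s1 by auto
  have "csupp \<alpha> \<in> K" using K s sub ne unfolding abs_simplicial_complex_def by blast
  then show "\<alpha> \<in> realization_points K" using eq s1 nn by (simp add: realization_points_def)
qed

lemma pts_in_cs:
  assumes "\<alpha> \<in> realization_points K"
  shows "\<alpha> \<in> closed_simplex (csupp \<alpha>)" "csupp \<alpha> \<in> K"
  using assms by (auto simp: realization_points_def closed_simplex_def)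

lemma topspace_realization:
  assumes K: "abs_simplicial_complex K"
  shows "topspace (realization K) = realization_points K"
proof -
  have "openin (realization K) (realization_points K)"
    unfolding openin_realization realization_open_def
  proof (intro conjI ballI)
    fix \<sigma> assume "\<sigma> \<in> K"
    then have "realization_points K \<inter> closed_simplex \<sigma> = closed_simplex \<sigma>"
      using cs_subset_pts[OF K] by blast
    then show "openin (subtopology PT (closed_simplex \<sigma>)) (realization_points K \<inter> closed_simplex \<sigma>)"
      by (simp add: openin_subtopology_refl)
  qed simp
  moreover have "topspace (realization K) \<subseteq> realization_points K"
    by (metis openin_realization openin_topspace realization_open_def)
  ultimately show ?thesis by (meson openin_subset subset_antisym)
qed

lemma closedin_cs:
  assumes fin: "finite \<tau>"
  shows "closedin PT (closed_simplex \<tau>)"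
proof -
  have eq: "closed_simplex \<tau> = (\<Inter>v. {\<alpha> \<in> topspace PT. \<alpha> v \<in> (if v \<in> \<tau> then {0..} else {0})})
     \<inter> {\<alpha> \<in> topspace PT. sum \<alpha> \<tau> \<in> {1}}"
    by (auto simp: closed_simplex_def csupp_def split: if_splits; metis order_refl)
  have c1: "continuous_map PT euclideanreal (\<lambda>\<alpha>. \<alpha> v)" for v :: 'a
    by (rule continuous_map_product_projection) simp
  have c2: "continuous_map PT euclideanreal (\<lambda>\<alpha>. sum \<alpha> \<tau>)"
    using fin by (intro continuous_map_sum c1)
  have h1: "closedin PT {\<alpha> \<in> topspace PT. \<alpha> v \<in> (if v \<in> \<tau> then {0..} else {0})}" for v
    by (intro closedin_continuous_map_preimage[OF c1]) auto
  have h2: "closedin PT {\<alpha> \<in> topspace PT. sum \<alpha> \<tau> \<in> {1}}"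
    by (intro closedin_continuous_map_preimage[OF c2]) auto
  have h3: "closedin PT (\<Inter>v. {\<alpha> \<in> topspace PT. \<alpha> v \<in> (if v \<in> \<tau> then {0..} else {0})})"
    by (rule closedin_INT, rule UNIV_not_empty, rule h1)
  show ?thesis unfolding eq by (rule closedin_Int[OF h3 h2])
qed

lemma pts_cs_closed:
  assumes A: "abs_simplicial_complex A" and fin: "finite \<sigma>"
  shows "closedin (subtopology PT (closed_simplex \<sigma>)) (realization_points A \<inter> closed_simplex \<sigma>)"
proof -
  have eq: "realization_points A \<inter> closed_simplex \<sigma> = closed_simplex \<sigma> \<inter> \<Union>(closed_simplex ` {\<tau>\<in>A. \<tau> \<subseteq> \<sigma>})"
  proof (intro equalityI subsetI)
    fix \<alpha> assume "\<alpha> \<in> realization_points A \<inter> closed_simplex \<sigma>"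
    then show "\<alpha> \<in> closed_simplex \<sigma> \<inter> \<Union>(closed_simplex ` {\<tau>\<in>A. \<tau> \<subseteq> \<sigma>})"
      using pts_in_cs[of \<alpha> A] by (auto simp: closed_simplex_def)
  next
    fix \<alpha> assume "\<alpha> \<in> closed_simplex \<sigma> \<inter> \<Union>(closed_simplex ` {\<tau>\<in>A. \<tau> \<subseteq> \<sigma>})"
    then obtain \<tau> where "\<tau> \<in> A" "\<tau> \<subseteq> \<sigma>" "\<alpha> \<in> closed_simplex \<tau>" "\<alpha> \<in> closed_simplex \<sigma>" by auto
    then show "\<alpha> \<in> realization_points A \<inter> closed_simplex \<sigma>"
      using cs_subset_pts[OF A] by blast
  qed
  have "finite {\<tau>\<in>A. \<tau> \<subseteq> \<sigma>}" by (rule finite_subset[of _ "Pow \<sigma>"]) (use fin in auto)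
  moreover have "\<And>\<tau>. \<tau> \<in> {\<tau>\<in>A. \<tau> \<subseteq> \<sigma>} \<Longrightarrow> finite \<tau>" using fin finite_subset by blast
  ultimately have "closedin PT (\<Union>(closed_simplex ` {\<tau>\<in>A. \<tau> \<subseteq> \<sigma>}))"
    by (intro closedin_Union) (auto intro: closedin_cs)
  then show ?thesis unfolding eq by (rule closedin_subtopology_Int_closed)
qed

lemma topspace_sub_PT [simp]: "topspace (subtopology PT S) = S"
  by (simp only: topspace_subtopology topspace_PT Int_UNIV_left)

lemma cs_diff_open:
  assumes B: "closedin (subtopology PT (closed_simplex \<sigma>)) (realization_points B \<inter> closed_simplex \<sigma>)"
  shows "openin (subtopology PT (closed_simplex \<sigma>)) (closed_simplex \<sigma> - realization_points B)"
proof -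
  have "openin (subtopology PT (closed_simplex \<sigma>)) (topspace (subtopology PT (closed_simplex \<sigma>)) - (realization_points B \<inter> closed_simplex \<sigma>))"
    by (rule openin_diff[OF openin_topspace B])
  moreover have "topspace (subtopology PT (closed_simplex \<sigma>)) - (realization_points B \<inter> closed_simplex \<sigma>) = closed_simplex \<sigma> - realization_points B"
    by auto
  ultimately show ?thesis by simp
qed

lemma openin_cs_diff_iff:
  assumes B: "closedin (subtopology PT (closed_simplex \<sigma>)) (realization_points B \<inter> closed_simplex \<sigma>)"
  shows "openin (subtopology PT (closed_simplex \<sigma> - realization_points B)) W \<longleftrightarrow>
         openin (subtopology PT (closed_simplex \<sigma>)) W \<and> W \<subseteq> closed_simplex \<sigma> - realization_points B"
proof -
  have "subtopology PT (closed_simplex \<sigma> - realization_points B) =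
        subtopology (subtopology PT (closed_simplex \<sigma>)) (closed_simplex \<sigma> - realization_points B)"
    by (simp add: subtopology_subtopology Int_absorb1 Diff_subset)
  then show ?thesis using openin_open_subtopology[OF cs_diff_open[OF B]] by simp
qed

lemma topspace_realization_minus:
  assumes K: "abs_simplicial_complex K"
  shows "topspace (realization_minus K B) = realization_points K - realization_points B"
  using topspace_realization[OF K] by (auto simp: realization_minus_def)

lemma D_open:
  assumes K: "abs_simplicial_complex K"
    and B: "\<And>\<sigma>. \<sigma> \<in> K \<Longrightarrow> closedin (subtopology PT (closed_simplex \<sigma>)) (realization_points B \<inter> closed_simplex \<sigma>)"
  shows "openin (realization K) (realization_points K - realization_points B)"
  unfolding openin_realization realization_open_def
proof (intro conjI ballI)
  fix \<sigma> assume s: "\<sigma> \<in> K"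
  have "(realization_points K - realization_points B) \<inter> closed_simplex \<sigma> = closed_simplex \<sigma> - realization_points B"
    using cs_subset_pts[OF K s] by blast
  then show "openin (subtopology PT (closed_simplex \<sigma>)) ((realization_points K - realization_points B) \<inter> closed_simplex \<sigma>)"
    using cs_diff_open[OF B[OF s]] by simp
qed simp

lemma quotient_rm:
  assumes K: "abs_simplicial_complex K"
    and B: "\<And>\<sigma>. \<sigma> \<in> K \<Longrightarrow> closedin (subtopology PT (closed_simplex \<sigma>)) (realization_points B \<inter> closed_simplex \<sigma>)"
  shows "quotient_map (sum_topology (\<lambda>\<sigma>. subtopology PT (closed_simplex \<sigma> - realization_points B)) K)
            (realization_minus K B) snd"
  unfolding quotient_map_def
proof (intro conjI allI impI)
  show "snd ` topspace (sum_topology (\<lambda>\<sigma>. subtopology PT (closed_simplex \<sigma> - realization_points B)) K) =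
    topspace (realization_minus K B)"
  proof (intro equalityI subsetI)
    fix x assume "x \<in> snd ` topspace (sum_topology (\<lambda>\<sigma>. subtopology PT (closed_simplex \<sigma> - realization_points B)) K)"
    then obtain \<sigma> where "\<sigma> \<in> K" "x \<in> closed_simplex \<sigma> - realization_points B" by auto
    then show "x \<in> topspace (realization_minus K B)"
      using cs_subset_pts[OF K] topspace_realization_minus[OF K] by blast
  next
    fix x assume "x \<in> topspace (realization_minus K B)"
    then have x: "x \<in> realization_points K" "x \<notin> realization_points B"
      using topspace_realization_minus[OF K] by auto
    then have "(csupp x, x) \<in> topspace (sum_topology (\<lambda>\<sigma>. subtopology PT (closed_simplex \<sigma> - realization_points B)) K)"
      using pts_in_cs[OF x(1)] by simp
    then show "x \<in> snd ` topspace (sum_topology (\<lambda>\<sigma>. subtopology PT (closed_simplex \<sigma> - realization_points B)) K)"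
      by (metis image_eqI snd_conv)
  qed
next
  fix U assume U: "U \<subseteq> topspace (realization_minus K B)"
  then have U': "U \<subseteq> realization_points K - realization_points B"
    using topspace_realization_minus[OF K] by simp
  have slice: "{y. (\<sigma>, y) \<in> {x \<in> topspace (sum_topology (\<lambda>\<sigma>. subtopology PT (closed_simplex \<sigma> - realization_points B)) K). snd x \<in> U}}
       = U \<inter> closed_simplex \<sigma>" if "\<sigma> \<in> K" for \<sigma>
    using U' that by auto
  have "openin (sum_topology (\<lambda>\<sigma>. subtopology PT (closed_simplex \<sigma> - realization_points B)) K)
      {x \<in> topspace (sum_topology (\<lambda>\<sigma>. subtopology PT (closed_simplex \<sigma> - realization_points B)) K). snd x \<in> U}
    \<longleftrightarrow> (\<forall>\<sigma>\<in>K. openin (subtopology PT (closed_simplex \<sigma> - realization_points B)) (U \<inter> closed_simplex \<sigma>))"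
    unfolding openin_sum_topology using slice by auto
  also have "\<dots> \<longleftrightarrow> (\<forall>\<sigma>\<in>K. openin (subtopology PT (closed_simplex \<sigma>)) (U \<inter> closed_simplex \<sigma>))"
    using openin_cs_diff_iff[OF B] U' by blast
  also have "\<dots> \<longleftrightarrow> openin (realization K) U"
    using U' by (auto simp: openin_realization realization_open_def)
  also have "\<dots> \<longleftrightarrow> openin (realization_minus K B) U"
    unfolding realization_minus_def using openin_open_subtopology[OF D_open[OF K B]] U' by blast
  finally show "openin (sum_topology (\<lambda>\<sigma>. subtopology PT (closed_simplex \<sigma> - realization_points B)) K)
      {x \<in> topspace (sum_topology (\<lambda>\<sigma>. subtopology PT (closed_simplex \<sigma> - realization_points B)) K). snd x \<in> U}
    \<longleftrightarrow> openin (realization_minus K B) U" .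
qed

lemma cont_sum:
  assumes "\<And>i. i \<in> I \<Longrightarrow> continuous_map (F i) Y g"
  shows "continuous_map (sum_topology F I) Y (g \<circ> snd)"
  unfolding continuous_map_def
proof (intro conjI allI impI)
  show "g \<circ> snd \<in> topspace (sum_topology F I) \<rightarrow> topspace Y"
    using assms by (auto simp: continuous_map_def Pi_iff)
next
  fix V assume V: "openin Y V"
  show "openin (sum_topology F I) {x \<in> topspace (sum_topology F I). (g \<circ> snd) x \<in> V}"
    unfolding openin_sum_topology
  proof (intro conjI ballI)
    fix i assume i: "i \<in> I"
    have "{x. (i, x) \<in> {x \<in> topspace (sum_topology F I). (g \<circ> snd) x \<in> V}} = {x \<in> topspace (F i). g x \<in> V}"
      using i by auto
    then show "openin (F i) {x. (i, x) \<in> {x \<in> topspace (sum_topology F I). (g \<circ> snd) x \<in> V}}"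
      using openin_continuous_map_preimage[OF assms[OF i] V] by simp
  qed auto
qed

lemma cont_prod_sum:
  assumes "\<And>i. i \<in> I \<Longrightarrow> continuous_map (prod_topology Z (F i)) Y g"
  shows "continuous_map (prod_topology Z (sum_topology F I)) Y (\<lambda>(t,(i,x)). g (t,x))"
  unfolding continuous_map_def
proof (intro conjI allI impI)
  show "(\<lambda>(t,(i,x)). g (t,x)) \<in> topspace (prod_topology Z (sum_topology F I)) \<rightarrow> topspace Y"
    using assms by (fastforce simp: continuous_map_def Pi_iff)
next
  fix V assume V: "openin Y V"
  let ?S = "{x \<in> topspace (prod_topology Z (sum_topology F I)). (\<lambda>(t,(i,x)). g (t,x)) x \<in> V}"
  show "openin (prod_topology Z (sum_topology F I)) ?S"
    unfolding openin_subopen[of _ ?S]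
  proof
    fix p assume p: "p \<in> ?S"
    then obtain t i x where pe: "p = (t,(i,x))" and i: "i \<in> I" and t: "t \<in> topspace Z"
      and x: "x \<in> topspace (F i)" and gV: "g (t,x) \<in> V"
      by auto
    have W: "openin (prod_topology Z (F i)) {u \<in> topspace (prod_topology Z (F i)). g u \<in> V}"
      using openin_continuous_map_preimage[OF assms[OF i] V] .
    have tx: "(t,x) \<in> {u \<in> topspace (prod_topology Z (F i)). g u \<in> V}" using t x gV by simp
    have "\<exists>U1 U2. openin Z U1 \<and> openin (F i) U2 \<and> t \<in> U1 \<and> x \<in> U2 \<and>
      U1 \<times> U2 \<subseteq> {u \<in> topspace (prod_topology Z (F i)). g u \<in> V}"
      using W[unfolded openin_prod_topology_alt, rule_format, OF tx] .
    then obtain U1 U2 where U: "openin Z U1" "openin (F i) U2" "t \<in> U1" "x \<in> U2"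
      "U1 \<times> U2 \<subseteq> {u \<in> topspace (prod_topology Z (F i)). g u \<in> V}"
      by meson
    have o2: "openin (sum_topology F I) ({i} \<times> U2)"
      unfolding openin_sum_topology
    proof (intro conjI ballI)
      show "{i} \<times> U2 \<subseteq> Sigma I (topspace \<circ> F)" using i openin_subset[OF U(2)] by auto
      fix j assume "j \<in> I"
      show "openin (F j) {x. (j,x) \<in> {i} \<times> U2}"
      proof (cases "j = i")
        case True then show ?thesis using U(2) by simp
      next
        case False then show ?thesis by simp
      qed
    qed
    show "\<exists>T. openin (prod_topology Z (sum_topology F I)) T \<and> p \<in> T \<and> T \<subseteq> ?S"
    proof (intro exI conjI)
      show "openin (prod_topology Z (sum_topology F I)) (U1 \<times> ({i} \<times> U2))"
        using U(1) o2 by (simp add: openin_prod_Times_iff)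
      show "p \<in> U1 \<times> ({i} \<times> U2)" using pe U by simp
      show "U1 \<times> ({i} \<times> U2) \<subseteq> ?S"
        using U(5) i openin_subset[OF U(1)] by auto
    qed
  qed
qed

lemma cont_from_rm:
  assumes K: "abs_simplicial_complex K"
    and B: "\<And>\<sigma>. \<sigma> \<in> K \<Longrightarrow> closedin (subtopology PT (closed_simplex \<sigma>)) (realization_points B \<inter> closed_simplex \<sigma>)"
    and f: "\<And>\<sigma>. \<sigma> \<in> K \<Longrightarrow> continuous_map (subtopology PT (closed_simplex \<sigma> - realization_points B)) Y f"
  shows "continuous_map (realization_minus K B) Y f"
proof -
  have "continuous_map (sum_topology (\<lambda>\<sigma>. subtopology PT (closed_simplex \<sigma> - realization_points B)) K) Y (f \<circ> snd)"
    by (rule cont_sum) (erule f)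
  with quotient_rm[OF K B] show ?thesis by (rule continuous_compose_quotient_map)
qed

lemma lc01: "locally_compact_space (top_of_set {0..1::real})"
  by (rule compact_imp_locally_compact_space) (simp add: compact_space_subtopology compactin_euclidean_iff)

lemma hd01: "Hausdorff_space (top_of_set {0..1::real})"
  by (simp add: Hausdorff_space_subtopology)

lemma cont_from_rm_prod:
  assumes K: "abs_simplicial_complex K"
    and B: "\<And>\<sigma>. \<sigma> \<in> K \<Longrightarrow> closedin (subtopology PT (closed_simplex \<sigma>)) (realization_points B \<inter> closed_simplex \<sigma>)"
    and f: "\<And>\<sigma>. \<sigma> \<in> K \<Longrightarrow> continuous_map (prod_topology (top_of_set {0..1::real}) (subtopology PT (closed_simplex \<sigma> - realization_points B))) Y H"
  shows "continuous_map (prod_topology (top_of_set {0..1::real}) (realization_minus K B)) Y H"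
proof -
  have q: "quotient_map (prod_topology (top_of_set {0..1::real}) (sum_topology (\<lambda>\<sigma>. subtopology PT (closed_simplex \<sigma> - realization_points B)) K))
     (prod_topology (top_of_set {0..1::real}) (realization_minus K B)) (\<lambda>(x,y). (x, snd y))"
    using quotient_map_prod_right[OF lc01 _ quotient_rm[OF K B]] hd01 by blast
  have eq: "H \<circ> (\<lambda>(x,y). (x, snd y)) = (\<lambda>(t,(i,x)). H (t,x))"
    by (auto simp: fun_eq_iff)
  show ?thesis
    by (rule continuous_compose_quotient_map[OF q]) (simp only: eq, rule cont_prod_sum[OF f])
qed

lemma cont_into_rm:
  assumes K: "abs_simplicial_complex K" and s: "\<sigma> \<in> K"
    and f: "continuous_map W PT f"
    and im: "\<And>x. x \<in> topspace W \<Longrightarrow> f x \<in> closed_simplex \<sigma> - realization_points B"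
  shows "continuous_map W (realization_minus K B) f"
proof -
  have fs: "continuous_map W (subtopology PT (closed_simplex \<sigma>)) f"
    using f im by (auto simp: continuous_map_in_subtopology)
  have "continuous_map W (realization K) f"
    unfolding continuous_map_def
  proof (intro conjI allI impI)
    show "f \<in> topspace W \<rightarrow> topspace (realization K)"
      using im cs_subset_pts[OF K s] topspace_realization[OF K] by blast
  next
    fix U assume U: "openin (realization K) U"
    then have "openin (subtopology PT (closed_simplex \<sigma>)) (U \<inter> closed_simplex \<sigma>)"
      using s by (auto simp: openin_realization realization_open_def)
    then have "openin W {x \<in> topspace W. f x \<in> U \<inter> closed_simplex \<sigma>}"
      by (rule openin_continuous_map_preimage[OF fs])
    moreover have "{x \<in> topspace W. f x \<in> U \<inter> closed_simplex \<sigma>} = {x \<in> topspace W. f x \<in> U}"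
      using im by blast
    ultimately show "openin W {x \<in> topspace W. f x \<in> U}" by simp
  qed
  then show ?thesis
    unfolding realization_minus_def continuous_map_in_subtopology
    using im cs_subset_pts[OF K s] by blast
qed

lemma pts_empty [simp]: "realization_points {} = {}"
  by (simp add: realization_points_def)

lemma realization_as_minus:
  assumes K: "abs_simplicial_complex K"
  shows "realization K = realization_minus K {}"
  by (simp add: realization_minus_def topspace_realization[OF K, symmetric])

definition Vs :: "'v set set \<Rightarrow> 'v set set \<Rightarrow> 'v set \<Rightarrow> 'v set set" where
  "Vs X A \<sigma> = {\<tau> \<in> sdiff_vertices X A. \<tau> \<subseteq> \<sigma>}"

definition fmap :: "'v set set \<Rightarrow> 'v set set \<Rightarrow> ('v \<Rightarrow> real) \<Rightarrow> 'v set \<Rightarrow> real" where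
  "fmap X A \<alpha> = (\<lambda>\<tau>. if \<tau> \<in> Vs X A (csupp \<alpha>)
      then prod \<alpha> \<tau> / sum (\<lambda>\<tau>'. prod \<alpha> \<tau>') (Vs X A (csupp \<alpha>)) else 0)"

definition hmap :: "('v set \<Rightarrow> real) \<Rightarrow> 'v \<Rightarrow> real" where
  "hmap \<beta> = (\<lambda>v. \<Sum>\<tau>\<in>csupp \<beta>. \<beta> \<tau> * (if v \<in> \<tau> then inverse (real (card \<tau>)) else 0))"

lemma abs_downI:
  assumes "abs_simplicial_complex K" "\<sigma> \<in> K" "\<tau> \<subseteq> \<sigma>" "\<tau> \<noteq> {}"
  shows "\<tau> \<in> K"
  using assms unfolding abs_simplicial_complex_def by blast

lemma abs_fin:
  assumes "abs_simplicial_complex K" "\<sigma> \<in> K"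
  shows "finite \<sigma>" "\<sigma> \<noteq> {}"
  using assms unfolding abs_simplicial_complex_def by auto

lemma V_mem:
  assumes "\<tau> \<in> sdiff_vertices X A"
  shows "\<tau> \<in> X" "\<tau> \<notin> A"
  using assms unfolding sdiff_vertices_def by auto

lemma exists_V:
  assumes X: "abs_simplicial_complex X" and S: "S \<in> X" "S \<notin> A"
  shows "\<exists>\<tau>\<in>sdiff_vertices X A. \<tau> \<subseteq> S"
proof -
  let ?M = "{\<tau> \<in> X - A. \<tau> \<subseteq> S}"
  have fin: "finite ?M"
    by (rule finite_subset[of _ "Pow S"]) (use abs_fin[OF X S(1)] in auto)
  have "S \<in> ?M" using S by auto
  from finite_has_minimal2[OF fin this] obtain m where
    m: "m \<in> ?M" "\<forall>b\<in>?M. b \<le> m \<longrightarrow> m = b" by blast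
  have "m \<in> sdiff_vertices X A"
    unfolding sdiff_vertices_def
  proof (intro CollectI conjI ballI impI)
    show "m \<in> X - A" using m by blast
    fix \<tau> assume "\<tau> \<in> X - A" "\<tau> \<subseteq> m"
    then have "\<tau> \<in> ?M" using m by blast
    then show "\<tau> = m" using m \<open>\<tau> \<subseteq> m\<close> by blast
  qed
  then show ?thesis using m by blast
qed

lemma Vs_finite:
  assumes "finite \<sigma>" shows "finite (Vs X A \<sigma>)"
  by (rule finite_subset[of _ "Pow \<sigma>"]) (use assms in \<open>auto simp: Vs_def\<close>)

lemma Vs_mono: "\<tau> \<subseteq> \<sigma> \<Longrightarrow> Vs X A \<tau> \<subseteq> Vs X A \<sigma>"
  by (auto simp: Vs_def)

lemma sd_abs:
  assumes X: "abs_simplicial_complex X"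
  shows "abs_simplicial_complex (simplicial_difference X A)"
  unfolding abs_simplicial_complex_def
proof (rule conjI)
  show "\<forall>S\<in>simplicial_difference X A. finite S \<and> S \<noteq> {}" by (simp add: simplicial_difference_def)
next
  show "\<forall>S\<in>simplicial_difference X A. \<forall>T. T \<subseteq> S \<and> T \<noteq> {} \<longrightarrow> T \<in> simplicial_difference X A"
  proof (intro ballI allI impI)
  fix S T assume S: "S \<in> simplicial_difference X A" and T: "T \<subseteq> S \<and> T \<noteq> {}"
  then have fS: "finite S" "S \<subseteq> sdiff_vertices X A" "\<Union>S \<in> X"
    by (auto simp: simplicial_difference_def)
  obtain t where t: "t \<in> T" using T by blast
  then have "t \<in> sdiff_vertices X A" using T fS by blast
  then have "t \<noteq> {}" using abs_fin[OF X V_mem(1)] by blast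
  then have "\<Union>T \<noteq> {}" using t by blast
  moreover have "\<Union>T \<subseteq> \<Union>S" using T by blast
  ultimately have "\<Union>T \<in> X" using abs_downI[OF X fS(3)] by blast
  then show "T \<in> simplicial_difference X A"
    using T fS finite_subset[of T S] by (auto simp: simplicial_difference_def)
  qed
qed

lemma cvertices_sd:
  "cvertices (simplicial_difference X A) = sdiff_vertices X A"
proof (intro equalityI subsetI)
  fix \<tau> assume "\<tau> \<in> cvertices (simplicial_difference X A)"
  then show "\<tau> \<in> sdiff_vertices X A"
    by (auto simp: cvertices_def simplicial_difference_def)
next
  fix \<tau> assume t: "\<tau> \<in> sdiff_vertices X A"
  then have "{\<tau>} \<in> simplicial_difference X A"
    using V_mem(1)[OF t] by (simp add: simplicial_difference_def)
  then show "\<tau> \<in> cvertices (simplicial_difference X A)"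
    by (auto simp: cvertices_def)
qed

lemma Vs_in_sd:
  assumes X: "abs_simplicial_complex X" and s: "\<sigma> \<in> X" "\<sigma> \<notin> A"
  shows "Vs X A \<sigma> \<in> simplicial_difference X A"
proof -
  obtain \<tau> where t: "\<tau> \<in> sdiff_vertices X A" "\<tau> \<subseteq> \<sigma>" using exists_V[OF X s] by blast
  have ne: "\<tau> \<noteq> {}" using abs_fin[OF X V_mem(1)[OF t(1)]] by blast
  have "\<Union>(Vs X A \<sigma>) \<subseteq> \<sigma>" by (auto simp: Vs_def)
  moreover have "\<tau> \<in> Vs X A \<sigma>" using t by (simp add: Vs_def)
  ultimately have "\<Union>(Vs X A \<sigma>) \<in> X"
    using abs_downI[OF X s(1)] ne by blast
  then show ?thesis
    using Vs_finite[OF abs_fin(1)[OF X s(1)]] \<open>\<tau> \<in> Vs X A \<sigma>\<close>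
    by (auto simp: simplicial_difference_def Vs_def)
qed

lemma csupp_pts:
  assumes "\<alpha> \<in> realization_points X" "\<alpha> \<notin> realization_points A"
  shows "csupp \<alpha> \<in> X" "csupp \<alpha> \<notin> A"
  using assms by (auto simp: realization_points_def)

lemma cs_props:
  assumes "\<alpha> \<in> closed_simplex \<sigma>"
  shows "\<And>v. 0 \<le> \<alpha> v" "csupp \<alpha> \<subseteq> \<sigma>" "sum \<alpha> \<sigma> = 1"
  using assms by (auto simp: closed_simplex_def)

lemma cs_mono:
  assumes "finite \<sigma>" "\<tau> \<subseteq> \<sigma>" "\<alpha> \<in> closed_simplex \<tau>"
  shows "\<alpha> \<in> closed_simplex \<sigma>"
proof -
  have "sum \<alpha> \<sigma> = sum \<alpha> \<tau>"
    using assms cs_props(2)[OF assms(3)]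
    by (intro sum.mono_neutral_right) (auto simp: csupp_def)
  then show ?thesis using assms cs_props[OF assms(3)] by (auto simp: closed_simplex_def)
qed

lemma prod_pos_iff:
  assumes "finite \<tau>" "\<And>v. 0 \<le> (\<alpha>::'a \<Rightarrow> real) v"
  shows "prod \<alpha> \<tau> \<noteq> 0 \<longleftrightarrow> \<tau> \<subseteq> csupp \<alpha>"
  using assms by (auto simp: csupp_def)

lemma proj_cont: "continuous_map (subtopology PT S) euclideanreal (\<lambda>\<alpha>. \<alpha> v)"
  by (rule continuous_map_from_subtopology) (rule continuous_map_product_projection, simp)

lemma V_fin:
  assumes X: "abs_simplicial_complex X" and t: "\<tau> \<in> Vs X A \<sigma>"
  shows "finite \<tau>" "\<tau> \<noteq> {}"
  using t abs_fin[OF X V_mem(1)] by (auto simp: Vs_def)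

lemma fmap_eq:
  assumes X: "abs_simplicial_complex X" and s: "\<sigma> \<in> X" and a: "\<alpha> \<in> closed_simplex \<sigma>"
  shows "fmap X A \<alpha> \<tau> = (if \<tau> \<in> Vs X A \<sigma> then prod \<alpha> \<tau> / sum (\<lambda>\<tau>'. prod \<alpha> \<tau>') (Vs X A \<sigma>) else 0)"
proof -
  have fs: "finite \<sigma>" using abs_fin[OF X s] by blast
  have sub: "csupp \<alpha> \<subseteq> \<sigma>" and nn: "\<And>v. 0 \<le> \<alpha> v" using cs_props[OF a] by auto
  have VV: "Vs X A (csupp \<alpha>) \<subseteq> Vs X A \<sigma>" using Vs_mono[OF sub] .
  have z: "prod \<alpha> \<tau>' = 0" if "\<tau>' \<in> Vs X A \<sigma> - Vs X A (csupp \<alpha>)" for \<tau>'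
  proof -
    have "\<not> \<tau>' \<subseteq> csupp \<alpha>" using that by (auto simp: Vs_def)
    moreover have "finite \<tau>'" using V_fin(1)[OF X] that by blast
    ultimately show ?thesis using prod_pos_iff[of \<tau>' \<alpha>] nn by blast
  qed
  have N: "sum (\<lambda>\<tau>'. prod \<alpha> \<tau>') (Vs X A (csupp \<alpha>)) = sum (\<lambda>\<tau>'. prod \<alpha> \<tau>') (Vs X A \<sigma>)"
    by (rule sum.mono_neutral_left[OF Vs_finite[OF fs] VV]) (use z in blast)
  show ?thesis
  proof (cases "\<tau> \<in> Vs X A (csupp \<alpha>)")
    case True
    then show ?thesis using VV N by (auto simp: fmap_def)
  next
    case False
    then show ?thesis using z[of \<tau>] by (auto simp: fmap_def)
  qed
qed

lemma N_pos:
  assumes X: "abs_simplicial_complex X" and s: "\<sigma> \<in> X" and a: "\<alpha> \<in> closed_simplex \<sigma>"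
    and na: "\<alpha> \<notin> realization_points A"
  shows "0 < sum (\<lambda>\<tau>'. prod \<alpha> \<tau>') (Vs X A \<sigma>)"
proof -
  have fs: "finite \<sigma>" using abs_fin[OF X s] by blast
  have sub: "csupp \<alpha> \<subseteq> \<sigma>" and nn: "\<And>v. 0 \<le> \<alpha> v" using cs_props[OF a] by auto
  have ap: "\<alpha> \<in> realization_points X" using cs_subset_pts[OF X s] a by blast
  obtain \<tau> where t: "\<tau> \<in> sdiff_vertices X A" "\<tau> \<subseteq> csupp \<alpha>"
    using exists_V[OF X csupp_pts[OF ap na]] by blast
  have tV: "\<tau> \<in> Vs X A \<sigma>" using t sub by (auto simp: Vs_def)
  have "0 < prod \<alpha> \<tau>"
  proof (rule prod_pos)
    fix v assume "v \<in> \<tau>"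
    then have "\<alpha> v \<noteq> 0" using t by (auto simp: csupp_def)
    then show "0 < \<alpha> v" using nn[of v] by simp
  qed
  then show ?thesis
    by (rule sum_pos2[OF Vs_finite[OF fs] tV]) (simp add: nn prod_nonneg)
qed

lemma fmap_cs:
  assumes X: "abs_simplicial_complex X" and s: "\<sigma> \<in> X" and a: "\<alpha> \<in> closed_simplex \<sigma>"
    and na: "\<alpha> \<notin> realization_points A"
  shows "fmap X A \<alpha> \<in> closed_simplex (Vs X A \<sigma>)"
proof -
  have fs: "finite \<sigma>" using abs_fin[OF X s] by blast
  have nn: "\<And>v. 0 \<le> \<alpha> v" using cs_props[OF a] by auto
  let ?N = "sum (\<lambda>\<tau>'. prod \<alpha> \<tau>') (Vs X A \<sigma>)"
  have Np: "0 < ?N" by (rule N_pos[OF X s a na])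
  have e: "\<And>\<tau>. fmap X A \<alpha> \<tau> = (if \<tau> \<in> Vs X A \<sigma> then prod \<alpha> \<tau> / ?N else 0)"
    by (rule fmap_eq[OF X s a])
  have "sum (fmap X A \<alpha>) (Vs X A \<sigma>) = sum (\<lambda>\<tau>. prod \<alpha> \<tau> / ?N) (Vs X A \<sigma>)"
    by (rule sum.cong) (simp_all add: e)
  also have "\<dots> = ?N / ?N" by (rule sum_divide_distrib[symmetric])
  also have "\<dots> = 1" using Np by simp
  finally have s1: "sum (fmap X A \<alpha>) (Vs X A \<sigma>) = 1" .
  show ?thesis
    unfolding closed_simplex_def
    using Np s1 by (auto simp: e csupp_def nn prod_nonneg split: if_splits)
qed

lemma fmap_cont:
  assumes X: "abs_simplicial_complex X" and s: "\<sigma> \<in> X"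
  shows "continuous_map (subtopology PT (closed_simplex \<sigma> - realization_points A)) PT (fmap X A)"
  unfolding continuous_map_componentwise_UNIV
proof
  fix \<tau>
  have fs: "finite \<sigma>" using abs_fin[OF X s] by blast
  let ?N = "\<lambda>\<alpha>. sum (\<lambda>\<tau>'. prod \<alpha> \<tau>') (Vs X A \<sigma>)"
  let ?g = "\<lambda>\<alpha>::'a \<Rightarrow> real. if \<tau> \<in> Vs X A \<sigma> then prod \<alpha> \<tau> / ?N \<alpha> else 0"
  have "continuous_map (subtopology PT (closed_simplex \<sigma> - realization_points A)) euclideanreal ?g"
  proof (cases "\<tau> \<in> Vs X A \<sigma>")
    case True
    have c1: "continuous_map (subtopology PT (closed_simplex \<sigma> - realization_points A)) euclideanreal (\<lambda>\<alpha>. prod \<alpha> \<tau>)"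
      by (rule continuous_map_prod[OF V_fin(1)[OF X True]]) (rule proj_cont)
    have c2: "continuous_map (subtopology PT (closed_simplex \<sigma> - realization_points A)) euclideanreal ?N"
    proof (rule continuous_map_sum[OF Vs_finite[OF fs]])
      fix \<tau>' assume "\<tau>' \<in> Vs X A \<sigma>"
      show "continuous_map (subtopology PT (closed_simplex \<sigma> - realization_points A)) euclideanreal (\<lambda>\<alpha>. prod \<alpha> \<tau>')"
        by (rule continuous_map_prod[OF V_fin(1)[OF X \<open>\<tau>' \<in> Vs X A \<sigma>\<close>]]) (rule proj_cont)
    qed
    have "continuous_map (subtopology PT (closed_simplex \<sigma> - realization_points A)) euclideanreal (\<lambda>\<alpha>. prod \<alpha> \<tau> / ?N \<alpha>)"
    proof (rule continuous_map_real_divide[OF c1 c2])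
      fix \<alpha> assume "\<alpha> \<in> topspace (subtopology PT (closed_simplex \<sigma> - realization_points A))"
      then have "\<alpha> \<in> closed_simplex \<sigma>" "\<alpha> \<notin> realization_points A" by auto
      then show "?N \<alpha> \<noteq> 0" using N_pos[OF X s] by (metis less_irrefl)
    qed
    then show ?thesis using True by simp
  next
    case False
    then show ?thesis by simp
  qed
  moreover have "\<And>\<alpha>. \<alpha> \<in> topspace (subtopology PT (closed_simplex \<sigma> - realization_points A)) \<Longrightarrow> ?g \<alpha> = fmap X A \<alpha> \<tau>"
    using fmap_eq[OF X s] by auto
  ultimately show "continuous_map (subtopology PT (closed_simplex \<sigma> - realization_points A)) euclideanreal (\<lambda>\<alpha>. fmap X A \<alpha> \<tau>)"
    by (rule continuous_map_eq)
qed

lemma hmap_eq: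
  assumes fS: "finite S" and b: "\<beta> \<in> closed_simplex S"
  shows "hmap \<beta> v = (\<Sum>\<tau>\<in>S. \<beta> \<tau> * (if v \<in> \<tau> then inverse (real (card \<tau>)) else 0))"
  unfolding hmap_def
  by (rule sum.mono_neutral_left[OF fS cs_props(2)[OF b]]) (auto simp: csupp_def)

lemma hmap_cont:
  assumes fS: "finite S"
  shows "continuous_map (subtopology PT (closed_simplex S)) PT hmap"
  unfolding continuous_map_componentwise_UNIV
proof
  fix v :: 'a
  let ?g = "\<lambda>\<beta>. (\<Sum>\<tau>\<in>S. \<beta> \<tau> * (if v \<in> \<tau> then inverse (real (card \<tau>)) else 0))"
  have "continuous_map (subtopology PT (closed_simplex S)) euclideanreal ?g"
    by (rule continuous_map_sum[OF fS], rule continuous_map_real_mult_right, rule proj_cont)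
  moreover have "\<And>\<beta>. \<beta> \<in> topspace (subtopology PT (closed_simplex S)) \<Longrightarrow> ?g \<beta> = hmap \<beta> v"
    using hmap_eq[OF fS] by simp
  ultimately show "continuous_map (subtopology PT (closed_simplex S)) euclideanreal (\<lambda>\<beta>. hmap \<beta> v)"
    by (rule continuous_map_eq)
qed

lemma sd_mem:
  assumes "S \<in> simplicial_difference X A"
  shows "finite S" "S \<noteq> {}" "S \<subseteq> sdiff_vertices X A" "\<Union>S \<in> X"
  using assms by (auto simp: simplicial_difference_def)

lemma hmap_cs:
  assumes X: "abs_simplicial_complex X" and A: "subcomplex A X"
    and S: "S \<in> simplicial_difference X A" and b: "\<beta> \<in> closed_simplex S"
  shows "hmap \<beta> \<in> closed_simplex (\<Union>S) - realization_points A"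
proof -
  note Sm = sd_mem[OF S]
  have tf: "finite \<tau>" "\<tau> \<noteq> {}" if "\<tau> \<in> S" for \<tau>
    using abs_fin[OF X V_mem(1)] Sm(3) that by blast+
  have fU: "finite (\<Union>S)" using Sm(1) tf by blast
  have nn: "\<And>\<tau>. 0 \<le> \<beta> \<tau>" using cs_props(1)[OF b] .
  have e: "\<And>v. hmap \<beta> v = (\<Sum>\<tau>\<in>S. \<beta> \<tau> * (if v \<in> \<tau> then inverse (real (card \<tau>)) else 0))"
    by (rule hmap_eq[OF Sm(1) b])
  have hnn: "0 \<le> hmap \<beta> v" for v
    unfolding e by (rule sum_nonneg) (simp add: nn)
  have hsupp: "csupp (hmap \<beta>) \<subseteq> \<Union>S"
  proof
    fix v assume v: "v \<in> csupp (hmap \<beta>)"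
    show "v \<in> \<Union>S"
    proof (rule ccontr)
      assume "v \<notin> \<Union>S"
      then have "hmap \<beta> v = 0" unfolding e by (intro sum.neutral) auto
      then show False using v by (simp add: csupp_def)
    qed
  qed
  have inner: "(\<Sum>v\<in>\<Union>S. (if v \<in> \<tau> then inverse (real (card \<tau>)) else 0)) = 1" if t: "\<tau> \<in> S" for \<tau>
  proof -
    have "(\<Sum>v\<in>\<Union>S. (if v \<in> \<tau> then inverse (real (card \<tau>)) else 0)) = (\<Sum>v\<in>\<Union>S \<inter> \<tau>. inverse (real (card \<tau>)))"
      by (rule sum.inter_restrict[OF fU, symmetric])
    also have "\<Union>S \<inter> \<tau> = \<tau>" using t by blast
    also have "(\<Sum>v\<in>\<tau>. inverse (real (card \<tau>))) = 1"
      using tf[OF t] by simp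
    finally show ?thesis .
  qed
  have "sum (hmap \<beta>) (\<Union>S) = (\<Sum>v\<in>\<Union>S. \<Sum>\<tau>\<in>S. \<beta> \<tau> * (if v \<in> \<tau> then inverse (real (card \<tau>)) else 0))"
    by (simp add: e)
  also have "\<dots> = (\<Sum>\<tau>\<in>S. \<Sum>v\<in>\<Union>S. \<beta> \<tau> * (if v \<in> \<tau> then inverse (real (card \<tau>)) else 0))"
    by (rule sum.swap)
  also have "\<dots> = (\<Sum>\<tau>\<in>S. \<beta> \<tau> * (\<Sum>v\<in>\<Union>S. (if v \<in> \<tau> then inverse (real (card \<tau>)) else 0)))"
    by (simp add: sum_distrib_left)
  also have "\<dots> = (\<Sum>\<tau>\<in>S. \<beta> \<tau>)"
    by (rule sum.cong) (simp_all add: inner)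
  also have "\<dots> = 1" using cs_props(3)[OF b] .
  finally have s1: "sum (hmap \<beta>) (\<Union>S) = 1" .
  have incs: "hmap \<beta> \<in> closed_simplex (\<Union>S)"
    unfolding closed_simplex_def using hnn hsupp s1 by blast
  have "hmap \<beta> \<notin> realization_points A"
  proof
    assume hA: "hmap \<beta> \<in> realization_points A"
    obtain \<tau>0 where t0: "\<tau>0 \<in> S" "\<beta> \<tau>0 \<noteq> 0"
    proof (rule ccontr)
      assume "\<not> thesis"
      then have "\<forall>\<tau>\<in>S. \<beta> \<tau> = 0" using that by blast
      then have "sum \<beta> S = 0" by simp
      then show False using cs_props(3)[OF b] by simp
    qed
    have "\<tau>0 \<subseteq> csupp (hmap \<beta>)"
    proof
      fix v assume v: "v \<in> \<tau>0"
      have "\<beta> \<tau>0 * (if v \<in> \<tau>0 then inverse (real (card \<tau>0)) else 0) \<le> hmap \<beta> v"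
        unfolding e by (rule member_le_sum[OF t0(1)]) (simp_all add: nn Sm(1))
      moreover have "0 < \<beta> \<tau>0 * (if v \<in> \<tau>0 then inverse (real (card \<tau>0)) else 0)"
        using v nn[of \<tau>0] t0(2) tf[OF t0(1)] by (simp add: card_gt_0_iff)
      ultimately show "v \<in> csupp (hmap \<beta>)" by (simp add: csupp_def)
    qed
    moreover have "csupp (hmap \<beta>) \<in> A" using hA by (simp add: realization_points_def)
    moreover have "abs_simplicial_complex A" using A by (simp add: subcomplex_def)
    ultimately have "\<tau>0 \<in> A" using abs_downI tf[OF t0(1)] by blast
    moreover have "\<tau>0 \<notin> A" using V_mem(2) Sm(3) t0(1) by blast
    ultimately show False by blast
  qed
  then show ?thesis using incs by blast
qed

definition comb :: "real \<Rightarrow> ('a \<Rightarrow> real) \<Rightarrow> ('a \<Rightarrow> real) \<Rightarrow> 'a \<Rightarrow> real" where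
  "comb t a b = (\<lambda>v. (1 - t) * a v + t * b v)"

lemma comb_cs:
  assumes a: "a \<in> closed_simplex \<sigma>" and b: "b \<in> closed_simplex \<sigma>" and t: "t \<in> {0..1}"
  shows "comb t a b \<in> closed_simplex \<sigma>"
proof -
  have nn: "0 \<le> comb t a b v" for v
    using cs_props(1)[OF a, of v] cs_props(1)[OF b, of v] t by (simp add: comb_def)
  have sp: "csupp (comb t a b) \<subseteq> \<sigma>"
  proof
    fix v assume v: "v \<in> csupp (comb t a b)"
    show "v \<in> \<sigma>"
    proof (rule ccontr)
      assume "v \<notin> \<sigma>"
      then have "a v = 0" "b v = 0" using cs_props(2)[OF a] cs_props(2)[OF b] by (auto simp: csupp_def)
      then show False using v by (simp add: csupp_def comb_def)
    qed
  qed
  have "sum (comb t a b) \<sigma> = (1 - t) * sum a \<sigma> + t * sum b \<sigma>"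
    by (simp add: comb_def sum.distrib sum_distrib_left)
  also have "\<dots> = 1" using cs_props(3)[OF a] cs_props(3)[OF b] by simp
  finally show ?thesis using nn sp by (simp add: closed_simplex_def)
qed

lemma comb_notB:
  assumes K: "abs_simplicial_complex K" and s: "\<sigma> \<in> K"
    and Bd: "\<forall>\<tau>\<in>B. \<forall>\<tau>'. \<tau>' \<subseteq> \<tau> \<and> \<tau>' \<noteq> {} \<longrightarrow> \<tau>' \<in> B"
    and a: "a \<in> closed_simplex \<sigma>" "a \<notin> realization_points B"
    and b: "b \<in> closed_simplex \<sigma>" "b \<notin> realization_points B"
    and t: "t \<in> {0..1}"
  shows "comb t a b \<notin> realization_points B"
proof
  assume c: "comb t a b \<in> realization_points B"
  show False
  proof (cases "t = 1")
    case True
    then have "comb t a b = b" by (simp add: comb_def fun_eq_iff)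
    then show False using c b by simp
  next
    case False
    then have t1: "0 < 1 - t" using t by simp
    have ap: "a \<in> realization_points K" using cs_subset_pts[OF K s] a by blast
    have "csupp a \<subseteq> csupp (comb t a b)"
    proof
      fix v assume "v \<in> csupp a"
      then have "0 < a v" using cs_props(1)[OF a(1), of v] by (simp add: csupp_def)
      then have "0 < (1 - t) * a v" using t1 by simp
      moreover have "0 \<le> t * b v" using t cs_props(1)[OF b(1), of v] by simp
      ultimately show "v \<in> csupp (comb t a b)" by (simp add: csupp_def comb_def)
    qed
    moreover have "csupp (comb t a b) \<in> B" using c by (simp add: realization_points_def)
    moreover have "csupp a \<noteq> {}" using ap abs_fin[OF K] by (auto simp: realization_points_def)
    ultimately have "csupp a \<in> B" using Bd by blast
    then have "a \<in> realization_points B" using ap by (simp add: realization_points_def)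
    then show False using a by simp
  qed
qed

lemma comb_cont:
  assumes k: "continuous_map (subtopology PT S) PT k"
  shows "continuous_map (prod_topology (top_of_set {0..1::real}) (subtopology PT S)) PT
            (\<lambda>p. comb (fst p) (k (snd p)) (snd p))"
  unfolding continuous_map_componentwise_UNIV comb_def
proof
  fix v
  let ?W = "prod_topology (top_of_set {0..1::real}) (subtopology PT S)"
  have cf: "continuous_map ?W euclideanreal fst"
    by (rule continuous_map_into_fulltopology[OF continuous_map_fst])
  have ck: "continuous_map (subtopology PT S) euclideanreal ((\<lambda>\<alpha>. \<alpha> v) \<circ> k)"
    by (rule continuous_map_compose[OF k]) (rule continuous_map_product_projection, simp)
  have c1: "continuous_map ?W euclideanreal ((\<lambda>\<alpha>. \<alpha> v) \<circ> k \<circ> snd)"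
    by (rule continuous_map_compose[OF continuous_map_snd ck])
  have c2: "continuous_map ?W euclideanreal ((\<lambda>\<alpha>. \<alpha> v) \<circ> snd)"
    by (intro continuous_map_compose[OF continuous_map_snd]) (rule proj_cont)
  have "continuous_map ?W euclideanreal (\<lambda>p. (1 - fst p) * ((\<lambda>\<alpha>. \<alpha> v) \<circ> k \<circ> snd) p + fst p * ((\<lambda>\<alpha>. \<alpha> v) \<circ> snd) p)"
    by (intro continuous_map_add continuous_map_real_mult continuous_map_diff continuous_map_const[THEN iffD2] cf c1 c2) simp
  then show "continuous_map ?W euclideanreal (\<lambda>x. (1 - fst x) * k (snd x) v + fst x * snd x v)"
    by (simp add: o_def)
qed

lemma cont_empty:
  assumes "topspace W = {}" shows "continuous_map W Y f"
  using assms unfolding continuous_map_def by simp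

lemma sub_abs: "subcomplex A X \<Longrightarrow> abs_simplicial_complex A"
  by (simp add: subcomplex_def)

lemma Bd_abs: "abs_simplicial_complex A \<Longrightarrow> \<tau> \<in> A \<Longrightarrow> \<tau>' \<subseteq> \<tau> \<Longrightarrow> \<tau>' \<noteq> {} \<Longrightarrow> \<tau>' \<in> A"
  by (rule abs_downI)

lemma Bd_empty: "\<tau> \<in> {} \<Longrightarrow> \<tau>' \<subseteq> \<tau> \<Longrightarrow> \<tau>' \<noteq> {} \<Longrightarrow> \<tau>' \<in> {}"
  by simp

lemma Bcl_empty: "closedin (subtopology PT (closed_simplex \<sigma>)) (realization_points {} \<inter> closed_simplex \<sigma>)"
  by simp

lemma topspace_empty_if_A:
  assumes A: "abs_simplicial_complex A" and s: "\<sigma> \<in> A"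
  shows "closed_simplex \<sigma> - realization_points A = {}"
  using cs_subset_pts[OF A s] by blast

lemma union_notA:
  assumes X: "abs_simplicial_complex X" and A: "abs_simplicial_complex A" and S: "S \<in> simplicial_difference X A"
  shows "\<Union>S \<notin> A"
proof
  assume U: "\<Union>S \<in> A"
  obtain \<tau> where t: "\<tau> \<in> S" using sd_mem(2)[OF S] by blast
  then have tV: "\<tau> \<in> sdiff_vertices X A" using sd_mem(3)[OF S] by blast
  have "\<tau> \<noteq> {}" by (rule abs_fin(2)[OF X V_mem(1)[OF tV]])
  then have "\<tau> \<in> A" using abs_downI[OF A U] t by blast
  then show False using V_mem(2)[OF tV] by blast
qed

lemma f_cont:
  assumes X: "abs_simplicial_complex X" and A: "subcomplex A X"
  shows "continuous_map (realization_minus X A) (realization (simplicial_difference X A)) (fmap X A)"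
proof -
  note Aa = sub_abs[OF A]
  have Bcl: "\<And>\<sigma>. \<sigma> \<in> X \<Longrightarrow> closedin (subtopology PT (closed_simplex \<sigma>)) (realization_points A \<inter> closed_simplex \<sigma>)"
    using pts_cs_closed[OF Aa] abs_fin(1)[OF X] by blast
  have "continuous_map (realization_minus X A) (realization_minus (simplicial_difference X A) {}) (fmap X A)"
  proof (rule cont_from_rm[OF X Bcl])
    fix \<sigma> assume s: "\<sigma> \<in> X"
    show "continuous_map (subtopology PT (closed_simplex \<sigma> - realization_points A)) (realization_minus (simplicial_difference X A) {}) (fmap X A)"
    proof (cases "\<sigma> \<in> A")
      case True
      then show ?thesis by (intro cont_empty) (simp add: topspace_empty_if_A[OF Aa])
    next
      case False
      show ?thesis
      proof (rule cont_into_rm[OF sd_abs[OF X] Vs_in_sd[OF X s False] fmap_cont[OF X s]])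
        fix \<alpha> assume "\<alpha> \<in> topspace (subtopology PT (closed_simplex \<sigma> - realization_points A))"
        then show "fmap X A \<alpha> \<in> closed_simplex (Vs X A \<sigma>) - realization_points {}"
          using fmap_cs[OF X s] by simp
      qed
    qed
  qed
  then show ?thesis using realization_as_minus[OF sd_abs[OF X]] by simp
qed

lemma h_cont:
  assumes X: "abs_simplicial_complex X" and A: "subcomplex A X"
  shows "continuous_map (realization (simplicial_difference X A)) (realization_minus X A) hmap"
proof -
  have "continuous_map (realization_minus (simplicial_difference X A) {}) (realization_minus X A) hmap"
  proof (rule cont_from_rm[OF sd_abs[OF X] Bcl_empty])
    fix S assume S: "S \<in> simplicial_difference X A"
    show "continuous_map (subtopology PT (closed_simplex S - realization_points {})) (realization_minus X A) hmap"
    proof -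
      have "continuous_map (subtopology PT (closed_simplex S)) (realization_minus X A) hmap"
      proof (rule cont_into_rm[OF X sd_mem(4)[OF S] hmap_cont[OF sd_mem(1)[OF S]]])
        fix \<beta> assume "\<beta> \<in> topspace (subtopology PT (closed_simplex S))"
        then show "hmap \<beta> \<in> closed_simplex (\<Union>S) - realization_points A"
          using hmap_cs[OF X A S] by simp
      qed
      then show ?thesis by simp
    qed
  qed
  then show ?thesis using realization_as_minus[OF sd_abs[OF X]] by simp
qed

lemma H1_cont:
  assumes X: "abs_simplicial_complex X" and A: "subcomplex A X"
  shows "continuous_map (prod_topology (top_of_set {0..1::real}) (realization_minus X A)) (realization_minus X A)
           (\<lambda>p. comb (fst p) (hmap (fmap X A (snd p))) (snd p))"
proof -
  note Aa = sub_abs[OF A]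
  have Bcl: "\<And>\<sigma>. \<sigma> \<in> X \<Longrightarrow> closedin (subtopology PT (closed_simplex \<sigma>)) (realization_points A \<inter> closed_simplex \<sigma>)"
    using pts_cs_closed[OF Aa] abs_fin(1)[OF X] by blast
  show ?thesis
  proof (rule cont_from_rm_prod[OF X Bcl])
    fix \<sigma> assume s: "\<sigma> \<in> X"
    show "continuous_map (prod_topology (top_of_set {0..1}) (subtopology PT (closed_simplex \<sigma> - realization_points A)))
        (realization_minus X A) (\<lambda>p. comb (fst p) (hmap (fmap X A (snd p))) (snd p))"
    proof (cases "\<sigma> \<in> A")
      case True
      then show ?thesis by (intro cont_empty) (simp add: topspace_empty_if_A[OF Aa])
    next
      case False
      have fs: "finite \<sigma>" using abs_fin[OF X s] by blast
      have VsS: "Vs X A \<sigma> \<in> simplicial_difference X A" by (rule Vs_in_sd[OF X s False])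
      have cf: "continuous_map (subtopology PT (closed_simplex \<sigma> - realization_points A)) (subtopology PT (closed_simplex (Vs X A \<sigma>))) (fmap X A)"
        unfolding continuous_map_in_subtopology using fmap_cont[OF X s] fmap_cs[OF X s] by auto
      have ck: "continuous_map (subtopology PT (closed_simplex \<sigma> - realization_points A)) PT (hmap \<circ> fmap X A)"
        by (rule continuous_map_compose[OF cf hmap_cont[OF sd_mem(1)[OF VsS]]])
      have hf_in: "hmap (fmap X A \<alpha>) \<in> closed_simplex \<sigma> - realization_points A"
        if a: "\<alpha> \<in> closed_simplex \<sigma>" "\<alpha> \<notin> realization_points A" for \<alpha>
      proof -
        have h: "hmap (fmap X A \<alpha>) \<in> closed_simplex (\<Union>(Vs X A \<sigma>)) - realization_points A"
          by (rule hmap_cs[OF X A VsS fmap_cs[OF X s a]])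
        have u: "\<Union>(Vs X A \<sigma>) \<subseteq> \<sigma>" by (auto simp: Vs_def)
        have "hmap (fmap X A \<alpha>) \<in> closed_simplex \<sigma>" using h cs_mono[OF fs u] by blast
        then show ?thesis using h by blast
      qed
      show ?thesis
      proof (rule cont_into_rm[OF X s])
        show "continuous_map (prod_topology (top_of_set {0..1}) (subtopology PT (closed_simplex \<sigma> - realization_points A))) PT
            (\<lambda>p. comb (fst p) (hmap (fmap X A (snd p))) (snd p))"
          using comb_cont[OF ck] by (simp add: o_def)
      next
        fix p assume p: "p \<in> topspace (prod_topology (top_of_set {0..1::real}) (subtopology PT (closed_simplex \<sigma> - realization_points A)))"
        then have t: "fst p \<in> {0..1}" and a: "snd p \<in> closed_simplex \<sigma>" "snd p \<notin> realization_points A"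
          by auto
        have hf1: "hmap (fmap X A (snd p)) \<in> closed_simplex \<sigma>" and hf2: "hmap (fmap X A (snd p)) \<notin> realization_points A"
          using hf_in[OF a] by auto
        show "comb (fst p) (hmap (fmap X A (snd p))) (snd p) \<in> closed_simplex \<sigma> - realization_points A"
        proof -
          have Bd: "\<forall>\<tau>\<in>A. \<forall>\<tau>'. \<tau>' \<subseteq> \<tau> \<and> \<tau>' \<noteq> {} \<longrightarrow> \<tau>' \<in> A"
            using Aa unfolding abs_simplicial_complex_def by blast
          show ?thesis using comb_cs[OF hf1 a(1) t] comb_notB[OF X s Bd hf1 hf2 a t] by blast
        qed
      qed
    qed
  qed
qed

lemma H2_cont:
  assumes X: "abs_simplicial_complex X" and A: "subcomplex A X"
  shows "continuous_map (prod_topology (top_of_set {0..1::real}) (realization (simplicial_difference X A))) (realization (simplicial_difference X A))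
           (\<lambda>p. comb (fst p) (fmap X A (hmap (snd p))) (snd p))"
proof -
  note Aa = sub_abs[OF A]
  note sdA = sd_abs[OF X, of A]
  have "continuous_map (prod_topology (top_of_set {0..1::real}) (realization_minus (simplicial_difference X A) {})) (realization_minus (simplicial_difference X A) {})
           (\<lambda>p. comb (fst p) (fmap X A (hmap (snd p))) (snd p))"
  proof (rule cont_from_rm_prod[OF sdA Bcl_empty])
    fix S assume S: "S \<in> simplicial_difference X A"
    have US: "\<Union>S \<in> X" "\<Union>S \<notin> A" using sd_mem(4)[OF S] union_notA[OF X Aa S] by auto
    have VsS: "Vs X A (\<Union>S) \<in> simplicial_difference X A" by (rule Vs_in_sd[OF X US])
    have SV: "S \<subseteq> Vs X A (\<Union>S)" using sd_mem(3)[OF S] by (auto simp: Vs_def)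
    have ch: "continuous_map (subtopology PT (closed_simplex S)) (subtopology PT (closed_simplex (\<Union>S) - realization_points A)) hmap"
      unfolding continuous_map_in_subtopology using hmap_cont[OF sd_mem(1)[OF S]] hmap_cs[OF X A S] by auto
    have ck: "continuous_map (subtopology PT (closed_simplex S)) PT (fmap X A \<circ> hmap)"
      by (rule continuous_map_compose[OF ch fmap_cont[OF X US(1)]])
    have "continuous_map (prod_topology (top_of_set {0..1}) (subtopology PT (closed_simplex S))) (realization_minus (simplicial_difference X A) {})
        (\<lambda>p. comb (fst p) (fmap X A (hmap (snd p))) (snd p))"
    proof (rule cont_into_rm[OF sdA VsS])
      show "continuous_map (prod_topology (top_of_set {0..1}) (subtopology PT (closed_simplex S))) PT
          (\<lambda>p. comb (fst p) (fmap X A (hmap (snd p))) (snd p))"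
        using comb_cont[OF ck] by (simp add: o_def)
    next
      fix p assume p: "p \<in> topspace (prod_topology (top_of_set {0..1::real}) (subtopology PT (closed_simplex S)))"
      then have t: "fst p \<in> {0..1}" and b: "snd p \<in> closed_simplex S" by auto
      have hb: "hmap (snd p) \<in> closed_simplex (\<Union>S)" "hmap (snd p) \<notin> realization_points A"
        using hmap_cs[OF X A S b] by auto
      have fh: "fmap X A (hmap (snd p)) \<in> closed_simplex (Vs X A (\<Union>S))"
        by (rule fmap_cs[OF X US(1) hb])
      have b2: "snd p \<in> closed_simplex (Vs X A (\<Union>S))"
        by (rule cs_mono[OF sd_mem(1)[OF VsS] SV b])
      show "comb (fst p) (fmap X A (hmap (snd p))) (snd p) \<in> closed_simplex (Vs X A (\<Union>S)) - realization_points {}"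
        using comb_cs[OF fh b2 t] by simp
    qed
    then show "continuous_map (prod_topology (top_of_set {0..1}) (subtopology PT (closed_simplex S - realization_points {})))
        (realization_minus (simplicial_difference X A) {}) (\<lambda>p. comb (fst p) (fmap X A (hmap (snd p))) (snd p))"
      by simp
  qed
  then show ?thesis using realization_as_minus[OF sdA] by simp
qed

lemma X_sub_E: "\<sigma> \<in> X \<Longrightarrow> \<sigma> \<subseteq> cvertices X"
  by (auto simp: cvertices_def)

locale invpair =
  fixes E :: "'v set" and p q :: "'v \<Rightarrow> 'v"
  assumes pE: "\<And>x. x \<in> E \<Longrightarrow> p x \<in> E" and qE: "\<And>x. x \<in> E \<Longrightarrow> q x \<in> E"
    and qp: "\<And>x. x \<in> E \<Longrightarrow> q (p x) = x" and pq: "\<And>x. x \<in> E \<Longrightarrow> p (q x) = x"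
begin

lemma img_qp: "\<tau> \<subseteq> E \<Longrightarrow> q ` p ` \<tau> = \<tau>"
  using qp by (force simp: image_iff)

lemma img_pq: "\<tau> \<subseteq> E \<Longrightarrow> p ` q ` \<tau> = \<tau>"
  using pq by (force simp: image_iff)

lemma inj_p: "\<tau> \<subseteq> E \<Longrightarrow> inj_on p \<tau>"
  by (metis inj_on_def qp subsetD)

lemma inj_q: "\<tau> \<subseteq> E \<Longrightarrow> inj_on q \<tau>"
  by (metis inj_on_def pq subsetD)

lemma sub_iff: "\<tau> \<subseteq> E \<Longrightarrow> C \<subseteq> E \<Longrightarrow> \<tau> \<subseteq> p ` C \<longleftrightarrow> q ` \<tau> \<subseteq> C"
  using qp pq by (auto simp: subset_iff image_iff) (metis)

lemma mem_p_iff: "\<rho> \<subseteq> E \<Longrightarrow> v \<in> p ` \<rho> \<longleftrightarrow> v \<in> E \<and> q v \<in> \<rho>"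
  using qp pq pE by (auto simp: image_iff subset_iff) (metis)

end

lemma fmap_equiv:
  assumes X: "abs_simplicial_complex X" and E: "E = cvertices X"
    and ip: "invpair E p q"
    and Vp: "\<And>\<tau>. \<tau> \<in> sdiff_vertices X A \<Longrightarrow> p ` \<tau> \<in> sdiff_vertices X A"
    and Vq: "\<And>\<tau>. \<tau> \<in> sdiff_vertices X A \<Longrightarrow> q ` \<tau> \<in> sdiff_vertices X A"
    and a: "\<alpha> \<in> realization_points X"
  shows "fmap X A (\<lambda>w. if w \<in> E then \<alpha> (q w) else 0) = (\<lambda>\<tau>. if \<tau> \<in> sdiff_vertices X A then fmap X A \<alpha> (q ` \<tau>) else 0)"
proof -
  interpret invpair E p q by (rule ip)
  define \<alpha>' where "\<alpha>' = (\<lambda>w. if w \<in> E then \<alpha> (q w) else 0)"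
  define C where "C = csupp \<alpha>"
  have CX: "C \<in> X" using a by (simp add: C_def realization_points_def)
  have CE: "C \<subseteq> E" using X_sub_E[OF CX] E by simp
  have VE: "\<tau> \<subseteq> E" if "\<tau> \<in> sdiff_vertices X A" for \<tau>
    using X_sub_E[OF V_mem(1)[OF that]] E by simp
  have cs': "csupp \<alpha>' = p ` C"
  proof (intro equalityI subsetI)
    fix w assume "w \<in> csupp \<alpha>'"
    then have w: "w \<in> E" "\<alpha> (q w) \<noteq> 0" by (auto simp: \<alpha>'_def csupp_def split: if_splits)
    then have "q w \<in> C" by (simp add: C_def csupp_def)
    then show "w \<in> p ` C" using pq[OF w(1)] by (metis image_eqI)
  next
    fix w assume "w \<in> p ` C"
    then obtain c where c: "c \<in> C" "w = p c" by blast
    then have "c \<in> E" using CE by blast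
    then show "w \<in> csupp \<alpha>'" using c pE qp by (auto simp: \<alpha>'_def csupp_def C_def)
  qed
  have Viff: "\<tau> \<in> Vs X A (p ` C) \<longleftrightarrow> q ` \<tau> \<in> Vs X A C" if t: "\<tau> \<in> sdiff_vertices X A" for \<tau>
    using t Vq[OF t] sub_iff[OF VE[OF t] CE] by (simp add: Vs_def)
  have prodeq: "prod \<alpha>' \<tau> = prod \<alpha> (q ` \<tau>)" if t: "\<tau> \<subseteq> E" for \<tau>
  proof -
    have "prod \<alpha>' \<tau> = prod (\<alpha> \<circ> q) \<tau>" using t by (intro prod.cong) (auto simp: \<alpha>'_def)
    also have "\<dots> = prod \<alpha> (q ` \<tau>)" by (rule prod.reindex[OF inj_q[OF t], symmetric])
    finally show ?thesis .
  qed
  have Neq: "sum (\<lambda>\<tau>'. prod \<alpha>' \<tau>') (Vs X A (p ` C)) = sum (\<lambda>\<tau>'. prod \<alpha> \<tau>') (Vs X A C)"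
  proof (rule sum.reindex_bij_witness[where j = "\<lambda>\<tau>. q ` \<tau>" and i = "\<lambda>\<rho>. p ` \<rho>"])
    fix \<tau> assume t: "\<tau> \<in> Vs X A (p ` C)"
    then have tV: "\<tau> \<in> sdiff_vertices X A" by (simp add: Vs_def)
    show "p ` q ` \<tau> = \<tau>" by (rule img_pq[OF VE[OF tV]])
    show "q ` \<tau> \<in> Vs X A C" using Viff[OF tV] t by simp
    show "prod \<alpha> (q ` \<tau>) = prod \<alpha>' \<tau>" using prodeq[OF VE[OF tV]] by simp
  next
    fix \<rho> assume r: "\<rho> \<in> Vs X A C"
    then have rV: "\<rho> \<in> sdiff_vertices X A" by (simp add: Vs_def)
    show "q ` p ` \<rho> = \<rho>" by (rule img_qp[OF VE[OF rV]])
    show "p ` \<rho> \<in> Vs X A (p ` C)" using Viff[OF Vp[OF rV]] img_qp[OF VE[OF rV]] r by simp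
  qed
  show ?thesis
  proof (rule ext)
    fix \<tau>
    show "fmap X A (\<lambda>w. if w \<in> E then \<alpha> (q w) else 0) \<tau> = (if \<tau> \<in> sdiff_vertices X A then fmap X A \<alpha> (q ` \<tau>) else 0)"
    proof (cases "\<tau> \<in> sdiff_vertices X A")
      case True
      then show ?thesis
        using Viff[OF True] prodeq[OF VE[OF True]] Neq
        by (simp add: fmap_def \<alpha>'_def[symmetric] cs' C_def[symmetric])
    next
      case False
      then show ?thesis by (simp add: fmap_def Vs_def)
    qed
  qed
qed

lemma hmap_equiv:
  assumes X: "abs_simplicial_complex X" and E: "E = cvertices X"
    and ip: "invpair E p q"
    and Vp: "\<And>\<tau>. \<tau> \<in> sdiff_vertices X A \<Longrightarrow> p ` \<tau> \<in> sdiff_vertices X A"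
    and Vq: "\<And>\<tau>. \<tau> \<in> sdiff_vertices X A \<Longrightarrow> q ` \<tau> \<in> sdiff_vertices X A"
    and b: "\<beta> \<in> realization_points (simplicial_difference X A)"
  shows "hmap (\<lambda>\<tau>. if \<tau> \<in> sdiff_vertices X A then \<beta> (q ` \<tau>) else 0) = (\<lambda>v. if v \<in> E then hmap \<beta> (q v) else 0)"
proof -
  interpret invpair E p q by (rule ip)
  define \<beta>' where "\<beta>' = (\<lambda>\<tau>. if \<tau> \<in> sdiff_vertices X A then \<beta> (q ` \<tau>) else 0)"
  define D where "D = csupp \<beta>"
  have Dsd: "D \<in> simplicial_difference X A" using b by (simp add: D_def realization_points_def)
  have DV: "D \<subseteq> sdiff_vertices X A" using sd_mem(3)[OF Dsd] .
  have VE: "\<tau> \<subseteq> E" if "\<tau> \<in> sdiff_vertices X A" for \<tau>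
    using X_sub_E[OF V_mem(1)[OF that]] E by simp
  have Vf: "finite \<tau>" if "\<tau> \<in> sdiff_vertices X A" for \<tau>
    using abs_fin(1)[OF X V_mem(1)[OF that]] .
  let ?c = "\<lambda>\<tau> v. (if v \<in> \<tau> then inverse (real (card \<tau>)) else 0)"
  have ceq: "?c (p ` \<rho>) v = (if v \<in> E then ?c \<rho> (q v) else 0)" if r: "\<rho> \<in> sdiff_vertices X A" for \<rho> v
  proof -
    have "card (p ` \<rho>) = card \<rho>" by (rule card_image[OF inj_p[OF VE[OF r]]])
    then show ?thesis using mem_p_iff[OF VE[OF r], of v] by auto
  qed
  have sum1: "hmap \<beta>' v = (\<Sum>\<rho>\<in>D. \<beta> \<rho> * ?c (p ` \<rho>) v)" for v
    unfolding hmap_def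
  proof (rule sum.reindex_bij_witness[where j = "\<lambda>\<tau>. q ` \<tau>" and i = "\<lambda>\<rho>. p ` \<rho>"])
    fix \<tau> assume t: "\<tau> \<in> csupp \<beta>'"
    then have tV: "\<tau> \<in> sdiff_vertices X A" and nz: "\<beta> (q ` \<tau>) \<noteq> 0"
      by (auto simp: csupp_def \<beta>'_def split: if_splits)
    show "p ` q ` \<tau> = \<tau>" by (rule img_pq[OF VE[OF tV]])
    show "q ` \<tau> \<in> D" using nz by (simp add: D_def csupp_def)
    show "\<beta> (q ` \<tau>) * ?c (p ` q ` \<tau>) v = \<beta>' \<tau> * ?c \<tau> v"
      using tV img_pq[OF VE[OF tV]] by (simp add: \<beta>'_def)
  next
    fix \<rho> assume r: "\<rho> \<in> D"
    then have rV: "\<rho> \<in> sdiff_vertices X A" using DV by blast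
    show "q ` p ` \<rho> = \<rho>" by (rule img_qp[OF VE[OF rV]])
    have "\<beta> \<rho> \<noteq> 0" using r by (simp add: D_def csupp_def)
    then show "p ` \<rho> \<in> csupp \<beta>'"
      using Vp[OF rV] img_qp[OF VE[OF rV]] by (simp add: csupp_def \<beta>'_def)
  qed
  show ?thesis
  proof (rule ext)
    fix v
    show "hmap (\<lambda>\<tau>. if \<tau> \<in> sdiff_vertices X A then \<beta> (q ` \<tau>) else 0) v = (if v \<in> E then hmap \<beta> (q v) else 0)"
    proof (cases "v \<in> E")
      case True
      have "hmap \<beta>' v = (\<Sum>\<rho>\<in>D. \<beta> \<rho> * ?c \<rho> (q v))"
        unfolding sum1
      proof (rule sum.cong)
        fix \<rho> assume "\<rho> \<in> D"
        then have rV: "\<rho> \<in> sdiff_vertices X A" using DV by blast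
        show "\<beta> \<rho> * ?c (p ` \<rho>) v = \<beta> \<rho> * ?c \<rho> (q v)"
          by (simp only: ceq[OF rV] True if_True)
      qed simp
      then show ?thesis using True by (simp add: \<beta>'_def[symmetric] hmap_def D_def)
    next
      case False
      have "hmap \<beta>' v = 0"
        unfolding sum1
      proof (rule sum.neutral, rule ballI)
        fix \<rho> assume "\<rho> \<in> D"
        then have rV: "\<rho> \<in> sdiff_vertices X A" using DV by blast
        show "\<beta> \<rho> * ?c (p ` \<rho>) v = 0"
          by (simp only: ceq[OF rV] False if_False mult_zero_right)
      qed
      then show ?thesis using False by (simp add: \<beta>'_def[symmetric])
    qed
  qed
qed

lemma comb_action: "realization_action G \<phi> K g (comb t a b) = comb t (realization_action G \<phi> K g a) (realization_action G \<phi> K g b)"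
  by (simp add: realization_action_def comb_def fun_eq_iff)

lemma act_invpair:
  assumes G: "group G" and act: "group_action G E \<phi>" and g: "g \<in> carrier G"
  shows "invpair E (\<phi> g) (\<phi> (inv\<^bsub>G\<^esub> g))"
proof -
  have ig: "inv\<^bsub>G\<^esub> g \<in> carrier G" by (rule group.inv_closed[OF G g])
  have one: "\<phi> \<one>\<^bsub>G\<^esub> x = x" if "x \<in> E" for x
    using fun_cong[OF group_action.id_eq_one[OF act], of x] that by simp
  show ?thesis
  proof
    fix x assume x: "x \<in> E"
    show "\<phi> g x \<in> E" by (rule group_action.element_image[OF act g x refl])
    show "\<phi> (inv\<^bsub>G\<^esub> g) x \<in> E" by (rule group_action.element_image[OF act ig x refl])
    show "\<phi> (inv\<^bsub>G\<^esub> g) (\<phi> g x) = x"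
      using group_action.composition_rule[OF act x ig g] group.l_inv[OF G g] one[OF x] by simp
    show "\<phi> g (\<phi> (inv\<^bsub>G\<^esub> g) x) = x"
      using group_action.composition_rule[OF act x g ig] group.r_inv[OF G g] one[OF x] by simp
  qed
qed

lemma V_invariant:
  assumes G: "group G" and act: "simplicial_action G \<phi> X"
    and Ainv: "\<forall>g\<in>carrier G. \<forall>\<sigma>\<in>A. \<phi> g ` \<sigma> \<in> A"
    and g: "g \<in> carrier G" and t: "\<tau> \<in> sdiff_vertices X A"
  shows "\<phi> g ` \<tau> \<in> sdiff_vertices X A"
proof -
  have ga: "group_action G (cvertices X) \<phi>" and sX: "\<forall>g\<in>carrier G. \<forall>\<sigma>\<in>X. \<phi> g ` \<sigma> \<in> X"
    using act by (auto simp: simplicial_action_def)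
  have ig: "inv\<^bsub>G\<^esub> g \<in> carrier G" by (rule group.inv_closed[OF G g])
  interpret invpair "cvertices X" "\<phi> g" "\<phi> (inv\<^bsub>G\<^esub> g)" by (rule act_invpair[OF G ga g])
  have tX: "\<tau> \<in> X" "\<tau> \<notin> A" using V_mem[OF t] by auto
  have tE: "\<tau> \<subseteq> cvertices X" by (rule X_sub_E[OF tX(1)])
  have pX: "\<phi> g ` \<tau> \<in> X" using sX g tX by blast
  have pA: "\<phi> g ` \<tau> \<notin> A"
  proof
    assume "\<phi> g ` \<tau> \<in> A"
    then have "\<phi> (inv\<^bsub>G\<^esub> g) ` \<phi> g ` \<tau> \<in> A" using Ainv ig by blast
    then show False using img_qp[OF tE] tX by simp
  qed
  show ?thesis
    unfolding sdiff_vertices_def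
  proof (intro CollectI conjI ballI impI)
    show "\<phi> g ` \<tau> \<in> X - A" using pX pA by blast
    fix \<rho> assume r: "\<rho> \<in> X - A" "\<rho> \<subseteq> \<phi> g ` \<tau>"
    have rE: "\<rho> \<subseteq> cvertices X" using X_sub_E r by blast
    have qX: "\<phi> (inv\<^bsub>G\<^esub> g) ` \<rho> \<in> X" using sX ig r by blast
    have qA: "\<phi> (inv\<^bsub>G\<^esub> g) ` \<rho> \<notin> A"
    proof
      assume "\<phi> (inv\<^bsub>G\<^esub> g) ` \<rho> \<in> A"
      then have "\<phi> g ` \<phi> (inv\<^bsub>G\<^esub> g) ` \<rho> \<in> A" using Ainv g by blast
      then show False using img_pq[OF rE] r by simp
    qed
    have "\<phi> (inv\<^bsub>G\<^esub> g) ` \<rho> \<subseteq> \<phi> (inv\<^bsub>G\<^esub> g) ` \<phi> g ` \<tau>" using r(2) by (rule image_mono)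
    then have "\<phi> (inv\<^bsub>G\<^esub> g) ` \<rho> \<subseteq> \<tau>" using img_qp[OF tE] by simp
    then have "\<phi> (inv\<^bsub>G\<^esub> g) ` \<rho> = \<tau>" using t qX qA unfolding sdiff_vertices_def by blast
    then have "\<phi> g ` \<phi> (inv\<^bsub>G\<^esub> g) ` \<rho> = \<phi> g ` \<tau>" by simp
    then show "\<rho> = \<phi> g ` \<tau>" using img_pq[OF rE] by simp
  qed
qed

lemma aV_eq:
  "realization_action G (sdiff_action \<phi>) (simplicial_difference X A) g \<beta> =
     (\<lambda>\<tau>. if \<tau> \<in> sdiff_vertices X A then \<beta> (\<phi> (inv\<^bsub>G\<^esub> g) ` \<tau>) else 0)"
  unfolding realization_action_def cvertices_sd sdiff_action_def by (rule refl)

theorem theorem4p8: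
  fixes G :: "('g, 'b) monoid_scheme"
    and \<phi> :: "'g \<Rightarrow> 'v \<Rightarrow> 'v"
    and X A :: "'v set set"
  assumes "group G" and "finite (carrier G)"
    and "abs_simplicial_complex X"
    and "subcomplex A X"
    and "simplicial_action G \<phi> X"
    and "\<forall>g\<in>carrier G. \<forall>\<sigma>\<in>A. \<phi> g ` \<sigma> \<in> A"
  shows "equivariant_homotopy_equivalent G
           (realization_minus X A) (realization_action G \<phi> X)
           (realization (simplicial_difference X A))
           (realization_action G (sdiff_action \<phi>) (simplicial_difference X A))"
proof -
  note G = assms(1) and X = assms(3) and A = assms(4) and act = assms(5) and Ainv = assms(6)
  have ga: "group_action G (cvertices X) \<phi>" using act by (simp add: simplicial_action_def)
  let ?S = "realization_minus X A"
  let ?T = "realization (simplicial_difference X A)"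
  let ?a = "realization_action G \<phi> X"
  let ?b = "realization_action G (sdiff_action \<phi>) (simplicial_difference X A)"
  have tS: "topspace ?S = realization_points X - realization_points A"
    by (rule topspace_realization_minus[OF X])
  have tT: "topspace ?T = realization_points (simplicial_difference X A)"
    by (rule topspace_realization[OF sd_abs[OF X]])
  have fc: "continuous_map ?S ?T (fmap X A)" by (rule f_cont[OF X A])
  have hc: "continuous_map ?T ?S hmap" by (rule h_cont[OF X A])
  have Vp: "\<And>\<tau>. \<tau> \<in> sdiff_vertices X A \<Longrightarrow> \<phi> g ` \<tau> \<in> sdiff_vertices X A" if "g \<in> carrier G" for g
    using V_invariant[OF G act Ainv that] by blast
  have feq: "fmap X A (?a g \<alpha>) = ?b g (fmap X A \<alpha>)" if g: "g \<in> carrier G" and a: "\<alpha> \<in> topspace ?S" for g \<alpha>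
  proof -
    have ig: "inv\<^bsub>G\<^esub> g \<in> carrier G" by (rule group.inv_closed[OF G g])
    have aX: "\<alpha> \<in> realization_points X" using a tS by auto
    have "fmap X A (?a g \<alpha>) = fmap X A (\<lambda>w. if w \<in> cvertices X then \<alpha> (\<phi> (inv\<^bsub>G\<^esub> g) w) else 0)"
      by (simp add: realization_action_def)
    also have "\<dots> = (\<lambda>\<tau>. if \<tau> \<in> sdiff_vertices X A then fmap X A \<alpha> (\<phi> (inv\<^bsub>G\<^esub> g) ` \<tau>) else 0)"
      by (rule fmap_equiv[OF X refl act_invpair[OF G ga g] Vp[OF g] Vp[OF ig] aX])
    also have "\<dots> = ?b g (fmap X A \<alpha>)" by (simp add: aV_eq)
    finally show ?thesis .
  qed
  have heq: "hmap (?b g \<beta>) = ?a g (hmap \<beta>)" if g: "g \<in> carrier G" and b: "\<beta> \<in> topspace ?T" for g \<beta>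
  proof -
    have ig: "inv\<^bsub>G\<^esub> g \<in> carrier G" by (rule group.inv_closed[OF G g])
    have bT: "\<beta> \<in> realization_points (simplicial_difference X A)" using b tT by auto
    have "hmap (?b g \<beta>) = hmap (\<lambda>\<tau>. if \<tau> \<in> sdiff_vertices X A then \<beta> (\<phi> (inv\<^bsub>G\<^esub> g) ` \<tau>) else 0)"
      by (simp add: aV_eq)
    also have "\<dots> = (\<lambda>v. if v \<in> cvertices X then hmap \<beta> (\<phi> (inv\<^bsub>G\<^esub> g) v) else 0)"
      by (rule hmap_equiv[OF X refl act_invpair[OF G ga g] Vp[OF g] Vp[OF ig] bT])
    also have "\<dots> = ?a g (hmap \<beta>)" by (simp add: realization_action_def)
    finally show ?thesis .
  qed
  have fT: "fmap X A \<alpha> \<in> topspace ?T" if "\<alpha> \<in> topspace ?S" for \<alpha>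
    using fc that by (auto simp: continuous_map_def)
  have hS: "hmap \<beta> \<in> topspace ?S" if "\<beta> \<in> topspace ?T" for \<beta>
    using hc that by (auto simp: continuous_map_def)
  show ?thesis
    unfolding equivariant_homotopy_equivalent_def
  proof (intro exI conjI)
    show "equivariant_map G ?S ?a ?T ?b (fmap X A)"
      unfolding equivariant_map_def using fc feq by blast
    show "equivariant_map G ?T ?b ?S ?a hmap"
      unfolding equivariant_map_def using hc heq by blast
    show "homotopic_with (\<lambda>k. \<forall>g\<in>carrier G. \<forall>x\<in>topspace ?S. k (?a g x) = ?a g (k x)) ?S ?S (hmap \<circ> fmap X A) id"
      unfolding homotopic_with_def
    proof (intro exI conjI allI ballI)
      show "continuous_map (prod_topology (top_of_set {0..1}) ?S) ?S (\<lambda>p. comb (fst p) (hmap (fmap X A (snd p))) (snd p))"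
        by (rule H1_cont[OF X A])
      fix x
      show "comb (fst (0::real, x)) (hmap (fmap X A (snd (0::real, x)))) (snd (0::real, x)) = (hmap \<circ> fmap X A) x"
        by (simp add: comb_def)
      show "comb (fst (1::real, x)) (hmap (fmap X A (snd (1::real, x)))) (snd (1::real, x)) = id x"
        by (simp add: comb_def)
    next
      fix t :: real and g x assume t: "t \<in> {0..1}" and g: "g \<in> carrier G" and x: "x \<in> topspace ?S"
      have "hmap (fmap X A (?a g x)) = ?a g (hmap (fmap X A x))"
        using feq[OF g x] heq[OF g fT[OF x]] by simp
      then show "comb (fst (t, ?a g x)) (hmap (fmap X A (snd (t, ?a g x)))) (snd (t, ?a g x)) =
                 ?a g (comb (fst (t, x)) (hmap (fmap X A (snd (t, x)))) (snd (t, x)))"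
        by (simp add: comb_action)
    qed
    show "homotopic_with (\<lambda>k. \<forall>g\<in>carrier G. \<forall>y\<in>topspace ?T. k (?b g y) = ?b g (k y)) ?T ?T (fmap X A \<circ> hmap) id"
      unfolding homotopic_with_def
    proof (intro exI conjI allI ballI)
      show "continuous_map (prod_topology (top_of_set {0..1}) ?T) ?T (\<lambda>p. comb (fst p) (fmap X A (hmap (snd p))) (snd p))"
        by (rule H2_cont[OF X A])
      fix x
      show "comb (fst (0::real, x)) (fmap X A (hmap (snd (0::real, x)))) (snd (0::real, x)) = (fmap X A \<circ> hmap) x"
        by (simp add: comb_def)
      show "comb (fst (1::real, x)) (fmap X A (hmap (snd (1::real, x)))) (snd (1::real, x)) = id x"
        by (simp add: comb_def)
    next
      fix t :: real and g x assume t: "t \<in> {0..1}" and g: "g \<in> carrier G" and x: "x \<in> topspace ?T"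
      have "fmap X A (hmap (?b g x)) = ?b g (fmap X A (hmap x))"
        using heq[OF g x] feq[OF g hS[OF x]] by simp
      then show "comb (fst (t, ?b g x)) (fmap X A (hmap (snd (t, ?b g x)))) (snd (t, ?b g x)) =
                 ?b g (comb (fst (t, x)) (fmap X A (hmap (snd (t, x)))) (snd (t, x)))"
        by (simp add: comb_action)
    qed
  qed
qed

end
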